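(* Let $d\ge 1$ and $h\ge 1$ be integers and let $T$ be the complete $d$-ary tree of height $h$. For every integer $0\le l\le h$ and every vertex $x$ at distance $l$ from the root, the hitting time from $x$ to the root is $f_h(d)-f_{h-l}(d)$.
   Context: The complete $d$-ary tree of height $h$ is the rooted tree in which every vertex at depth less than $h$ has exactly $d$ children and every vertex at depth $h$ is a leaf. For nonnegative integers $n$, define the polynomial $f_0(d)=0$ and, for $n\ge 1$, $f_n(d)=\left(\sum_{i=0}^{n-1}(2n-2i)d^i\right)-n$. A simple random walk moves at each step to a uniformly random neighbor; the hitting time from $x$ to $y$ is the expected number of steps for a simple random walk started at $x$ to first reach $y$. *)

theory Defs
  imports "HOL-Probability.Probability"
begin

(* Complete d-ary tree of height h: vertices are words over {0..<d} of length \<le> h;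
   the root is [], the children of v are v @ [i] (i < d), depth of v = length v. *)
definition tree_verts :: "nat \<Rightarrow> nat \<Rightarrow> nat list set" where
  "tree_verts d h = {v. length v \<le> h \<and> (\<forall>i\<in>set v. i < d)}"

definition tree_adj :: "nat \<Rightarrow> nat \<Rightarrow> nat list \<Rightarrow> nat list \<Rightarrow> bool" where
  "tree_adj d h u v \<longleftrightarrow> u \<in> tree_verts d h \<and> v \<in> tree_verts d h \<and>
     ((\<exists>i. v = u @ [i]) \<or> (\<exists>i. u = v @ [i]))"

definition srw_step :: "('a \<Rightarrow> 'a \<Rightarrow> bool) \<Rightarrow> 'a \<Rightarrow> 'a pmf" where
  "srw_step E x = pmf_of_set {y. E x y}"

(* srw_avoid E r n x = P_x(X_0 \<noteq> r, ..., X_n \<noteq> r) = P_x(tau_r > n),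
   where tau_r is the first time the walk is at r. *)
primrec srw_avoid :: "('a \<Rightarrow> 'a \<Rightarrow> bool) \<Rightarrow> 'a \<Rightarrow> nat \<Rightarrow> 'a \<Rightarrow> real" where
  "srw_avoid E r 0 x = (if x = r then 0 else 1)"
| "srw_avoid E r (Suc n) x =
     (if x = r then 0 else measure_pmf.expectation (srw_step E x) (srw_avoid E r n))"

(* Hitting time E_x[tau_r] = \<Sum>_{n\<ge>0} P_x(tau_r > n) (possibly infinite). *)
definition hitting_time :: "('a \<Rightarrow> 'a \<Rightarrow> bool) \<Rightarrow> 'a \<Rightarrow> 'a \<Rightarrow> ennreal" where
  "hitting_time E x r = (\<Sum>n. ennreal (srw_avoid E r n x))"

definition f_poly :: "nat \<Rightarrow> real \<Rightarrow> real" where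
  "f_poly n d = (if n = 0 then 0
     else (\<Sum>i<n. (2 * real n - 2 * real i) * d ^ i) - real n)"

end

theory Submission
  imports Defs
begin

primrec Rf :: "('a \<Rightarrow> 'a \<Rightarrow> bool) \<Rightarrow> 'a \<Rightarrow> ('a \<Rightarrow> real) \<Rightarrow> nat \<Rightarrow> 'a \<Rightarrow> real" where
  "Rf E r g 0 x = g x"
| "Rf E r g (Suc n) x = (if x = r then 0 else measure_pmf.expectation (srw_step E x) (Rf E r g n))"

lemma exp_step:
  assumes "finite {y. E x y}" "{y. E x y} \<noteq> {}"
  shows "measure_pmf.expectation (srw_step E x) f = (\<Sum>y\<in>{y. E x y}. f y) / card {y. E x y}"
  unfolding srw_step_def by (rule integral_pmf_of_set[OF assms(2) assms(1)])

lemma generic_hit: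
  fixes E :: "'a \<Rightarrow> 'a \<Rightarrow> bool" and g :: "'a \<Rightarrow> real"
  assumes A1: "\<And>x y. x \<in> V \<Longrightarrow> E x y \<Longrightarrow> y \<in> V"
    and A2: "\<And>x. x \<in> V \<Longrightarrow> x \<noteq> r \<Longrightarrow> finite {y. E x y} \<and> {y. E x y} \<noteq> {}"
    and A3: "\<And>x. x \<in> V \<Longrightarrow> x \<noteq> r \<Longrightarrow> g x = 1 + (\<Sum>y\<in>{y. E x y}. g y) / card {y. E x y}"
    and A4: "g r = 0"
    and A5: "\<And>x. x \<in> V \<Longrightarrow> 0 \<le> g x \<and> g x \<le> M"
    and xV: "x \<in> V"
  shows "hitting_time E x r = ennreal (g x)"
proof -
  have ex: "measure_pmf.expectation (srw_step E z) f = (\<Sum>y\<in>{y. E z y}. f y) / card {y. E z y}"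
    if "z \<in> V" "z \<noteq> r" for z f using A2[OF that] by (intro exp_step) auto
  have nnA: "\<forall>z\<in>V. 0 \<le> srw_avoid E r n z" for n
  proof (induction n)
    case 0 then show ?case by simp
  next
    case (Suc n)
    show ?case
    proof
      fix z assume z: "z \<in> V"
      show "0 \<le> srw_avoid E r (Suc n) z"
      proof (cases "z = r")
        case False
        have "0 \<le> (\<Sum>y\<in>{y. E z y}. srw_avoid E r n y) / card {y. E z y}"
          using Suc A1[OF z] by (auto intro!: divide_nonneg_nonneg sum_nonneg)
        then show ?thesis using False ex[OF z False] by simp
      qed simp
    qed
  qed
  have nnR: "\<forall>z\<in>V. 0 \<le> Rf E r g n z" for n
  proof (induction n)
    case 0 then show ?case using A5 by simp
  next
    case (Suc n)
    show ?case
    proof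
      fix z assume z: "z \<in> V"
      show "0 \<le> Rf E r g (Suc n) z"
      proof (cases "z = r")
        case False
        have "0 \<le> (\<Sum>y\<in>{y. E z y}. Rf E r g n y) / card {y. E z y}"
          using Suc A1[OF z] by (auto intro!: divide_nonneg_nonneg sum_nonneg)
        then show ?thesis using False ex[OF z False] by simp
      qed simp
    qed
  qed
  have RM: "\<forall>z\<in>V. Rf E r g n z \<le> M * srw_avoid E r n z" for n
  proof (induction n)
    case 0 then show ?case using A5 A4 by simp
  next
    case (Suc n)
    show ?case
    proof
      fix z assume z: "z \<in> V"
      show "Rf E r g (Suc n) z \<le> M * srw_avoid E r (Suc n) z"
      proof (cases "z = r")
        case False
        have "(\<Sum>y\<in>{y. E z y}. Rf E r g n y) \<le> (\<Sum>y\<in>{y. E z y}. M * srw_avoid E r n y)"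
          using Suc A1[OF z] by (auto intro!: sum_mono)
        then have "(\<Sum>y\<in>{y. E z y}. Rf E r g n y) / card {y. E z y}
             \<le> M * ((\<Sum>y\<in>{y. E z y}. srw_avoid E r n y) / card {y. E z y})"
          by (simp add: sum_distrib_left[symmetric] divide_right_mono)
        then show ?thesis using False ex[OF z False] by simp
      qed simp
    qed
  qed
  have dec: "\<forall>z\<in>V. (\<Sum>n<N. srw_avoid E r n z) + Rf E r g N z = g z" for N
  proof (induction N)
    case 0 then show ?case by simp
  next
    case (Suc N)
    show ?case
    proof
      fix z assume z: "z \<in> V"
      show "(\<Sum>n<Suc N. srw_avoid E r n z) + Rf E r g (Suc N) z = g z"
      proof (cases "z = r")
        case True
        have "srw_avoid E r n r = 0" for n by (cases n) auto
        then show ?thesis using A4 True by simp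
      next
        case False
        let ?S = "{y. E z y}"
        have "(\<Sum>n<Suc N. srw_avoid E r n z) = 1 + (\<Sum>n<N. srw_avoid E r (Suc n) z)"
          by (subst sum.lessThan_Suc_shift) (simp add: False)
        also have "(\<Sum>n<N. srw_avoid E r (Suc n) z) = (\<Sum>n<N. (\<Sum>y\<in>?S. srw_avoid E r n y) / card ?S)"
          using False ex[OF z False] by simp
        also have "\<dots> = (\<Sum>y\<in>?S. (\<Sum>n<N. srw_avoid E r n y)) / card ?S"
          by (simp add: sum_divide_distrib[symmetric] sum.swap[of _ "{..<N}"])
        finally have 1: "(\<Sum>n<Suc N. srw_avoid E r n z) = 1 + (\<Sum>y\<in>?S. (\<Sum>n<N. srw_avoid E r n y)) / card ?S" .
        have 2: "Rf E r g (Suc N) z = (\<Sum>y\<in>?S. Rf E r g N y) / card ?S"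
          using False ex[OF z False] by simp
        have "(\<Sum>y\<in>?S. (\<Sum>n<N. srw_avoid E r n y)) + (\<Sum>y\<in>?S. Rf E r g N y) = (\<Sum>y\<in>?S. g y)"
          using Suc A1[OF z] by (simp add: sum.distrib[symmetric])
        then show ?thesis using 1 2 A3[OF z False] by (simp add: add_divide_distrib[symmetric])
      qed
    qed
  qed
  have summ: "summable (\<lambda>n. srw_avoid E r n x)"
    apply (rule summableI_nonneg_bounded[where x = "g x"])
  proof -
    fix n
    have "(\<Sum>i<n. srw_avoid E r i x) + Rf E r g n x = g x" "0 \<le> Rf E r g n x"
      using dec nnR xV by auto
    then show "(\<Sum>i<n. srw_avoid E r i x) \<le> g x" by linarith
  qed (use nnA xV in auto)
  have "(\<lambda>n. srw_avoid E r n x) \<longlonglongrightarrow> 0" using summable_LIMSEQ_zero[OF summ] .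
  then have h0: "(\<lambda>n. M * srw_avoid E r n x) \<longlonglongrightarrow> 0" by (simp add: tendsto_mult_right_zero)
  have R0: "(\<lambda>n. Rf E r g n x) \<longlonglongrightarrow> 0"
    by (rule real_tendsto_sandwich[where f="\<lambda>_. 0" and h="\<lambda>n. M * srw_avoid E r n x"])
       (use nnR RM xV h0 in auto)
  have "(\<lambda>N. g x - Rf E r g N x) \<longlonglongrightarrow> g x - 0" by (intro tendsto_diff tendsto_const R0)
  then have "(\<lambda>N. \<Sum>n<N. srw_avoid E r n x) \<longlonglongrightarrow> g x"
    using dec xV by (simp add: eq_diff_eq[symmetric])
  then have "(\<lambda>n. srw_avoid E r n x) sums g x" by (simp add: sums_def)
  then have sg: "(\<Sum>n. srw_avoid E r n x) = g x" by (simp add: sums_iff)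
  have "(\<Sum>n. ennreal (srw_avoid E r n x)) = ennreal (\<Sum>n. srw_avoid E r n x)"
    by (rule suminf_ennreal2) (use nnA xV summ in auto)
  then show ?thesis unfolding hitting_time_def sg .
qed


lemma f_alt: "f_poly n d = (\<Sum>i<n. (2 * real n - 2 * real i) * d ^ i) - real n"
  by (simp add: f_poly_def)

lemma f_delta: "f_poly (Suc k) d - f_poly k d = 2 * (\<Sum>i\<le>k. d ^ i) - 1"
proof -
  have "(\<Sum>i<Suc k. (2 * real (Suc k) - 2 * real i) * d ^ i)
      = (\<Sum>i<Suc k. (2 * real k - 2 * real i) * d ^ i) + 2 * (\<Sum>i<Suc k. d ^ i)"
    by (simp add: sum.distrib[symmetric] sum_distrib_left algebra_simps)
  also have "(\<Sum>i<Suc k. (2 * real k - 2 * real i) * d ^ i) = (\<Sum>i<k. (2 * real k - 2 * real i) * d ^ i)"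
    by simp
  finally show ?thesis by (simp add: f_alt[of "Suc k"] f_alt[of k] lessThan_Suc_atMost)
qed

lemma S_suc: "(\<Sum>i\<le>Suc m. (d::real) ^ i) = 1 + d * (\<Sum>i\<le>m. d ^ i)"
  by (subst sum.atMost_Suc_shift) (simp add: sum_distrib_left)

lemma S_ge1: "(\<Sum>i\<le>m. (d::real) ^ i) \<ge> 1" if "d \<ge> 0"
  using member_le_sum[of 0 "{..m}" "\<lambda>i. d^i"] that by simp

lemma f_mono: "d \<ge> 0 \<Longrightarrow> k \<le> m \<Longrightarrow> f_poly k d \<le> f_poly m d"
proof (induction m)
  case 0 then show ?case by simp
next
  case (Suc m)
  have "f_poly m d \<le> f_poly (Suc m) d" using f_delta[of m d] S_ge1[of d m] Suc.prems by simp
  then show ?case using Suc by (cases "k = Suc m") auto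
qed

lemma f_nonneg: "d \<ge> 0 \<Longrightarrow> 0 \<le> f_poly k d"
  using f_mono[of d 0 k] by (simp add: f_poly_def)

lemma nbrs:
  assumes "x \<in> tree_verts d h" "x \<noteq> []"
  shows "{y. tree_adj d h x y} = insert (butlast x) (if length x < h then (\<lambda>i. x @ [i]) ` {..<d} else {})"
proof -
  have bx: "x = butlast x @ [last x]" using assms(2) by simp
  have bv: "butlast x \<in> tree_verts d h" using assms(1)
    by (auto simp: tree_verts_def dest: in_set_butlastD)
  show ?thesis
    using assms(1) bv bx
    apply (auto simp: tree_adj_def split: if_splits)
    apply (auto simp: tree_verts_def)
    done
qed


lemma card_nbrs:
  fixes G :: "nat \<Rightarrow> real"
  assumes "x \<in> tree_verts d h" "x \<noteq> []" "length x < h"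
  shows "card {y. tree_adj d h x y} = Suc d"
    and "(\<Sum>y\<in>{y. tree_adj d h x y}. G (length y)) = G (length x - 1) + real d * G (Suc (length x))"
proof -
  have ni: "butlast x \<notin> (\<lambda>i. x @ [i]) ` {..<d}" using assms(2) by (auto dest!: arg_cong[where f=length])
  have inj: "inj_on (\<lambda>i. x @ [i]) {..<d}" by (auto simp: inj_on_def)
  have eq: "{y. tree_adj d h x y} = insert (butlast x) ((\<lambda>i. x @ [i]) ` {..<d})"
    using nbrs[OF assms(1,2)] assms(3) by simp
  show "card {y. tree_adj d h x y} = Suc d"
    unfolding eq using ni inj by (simp add: card_image)
  show "(\<Sum>y\<in>{y. tree_adj d h x y}. G (length y)) = G (length x - 1) + real d * G (Suc (length x))"
    unfolding eq using ni inj by (simp add: sum.reindex)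
qed

theorem mainTheorem7:
  fixes d h l :: nat and x :: "nat list"
  assumes "d \<ge> 1" and "h \<ge> 1" and "l \<le> h"
    and "x \<in> tree_verts d h" and "length x = l"
  shows "hitting_time (tree_adj d h) x [] = ennreal (f_poly h (real d) - f_poly (h - l) (real d))"
proof -
  define F where "F k = f_poly k (real d)" for k
  define G where "G m = F h - F (h - m)" for m
  have d0: "real d \<ge> 0" by simp
  have "hitting_time (tree_adj d h) x [] = ennreal (G (length x))"
  proof (rule generic_hit[where V = "tree_verts d h" and g = "\<lambda>y. G (length y)" and M = "F h"])
    show "y \<in> tree_verts d h" if "tree_adj d h z y" for z y using that by (simp add: tree_adj_def)
  next
    fix z assume z: "z \<in> tree_verts d h" "z \<noteq> []"
    show "finite {y. tree_adj d h z y} \<and> {y. tree_adj d h z y} \<noteq> {}"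
      using nbrs[OF z] by simp
  next
    fix z assume z: "z \<in> tree_verts d h" "z \<noteq> []"
    have lz: "length z \<le> h" "length z \<ge> 1" using z by (auto simp: tree_verts_def Suc_le_eq)
    show "G (length z) = 1 + (\<Sum>y\<in>{y. tree_adj d h z y}. G (length y)) / card {y. tree_adj d h z y}"
    proof (cases "length z < h")
      case True
      obtain j where j: "h - length z = Suc j" using True by (metis Suc_diff_Suc)
      have h1: "h - (length z - 1) = Suc (Suc j)" using j lz by simp
      have h2: "h - Suc (length z) = j" using j by simp
      have D1: "F (Suc (Suc j)) - F (Suc j) = 2 * (1 + real d * (\<Sum>i\<le>j. real d ^ i)) - 1"
        unfolding F_def using f_delta[of "Suc j" "real d"] S_suc[where m=j and d="real d"] by simp
      have D2: "F (Suc j) - F j = 2 * (\<Sum>i\<le>j. real d ^ i) - 1"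
        unfolding F_def using f_delta[of j "real d"] by simp
      have "(\<Sum>y\<in>{y. tree_adj d h z y}. G (length y)) / card {y. tree_adj d h z y}
          = (G (length z - 1) + real d * G (Suc (length z))) / (real d + 1)"
        using card_nbrs(1)[OF z True] card_nbrs(2)[OF z True, of G] by simp
      also have "\<dots> = (F h - F (Suc (Suc j)) + real d * (F h - F j)) / (real d + 1)"
        unfolding G_def h1 h2 by simp
      also have "\<dots> = F h - F (Suc j) - 1"
        using D1 D2 by (simp add: field_simps)
      finally show ?thesis unfolding G_def j by simp
    next
      case False
      then have lh: "length z = h" using lz by simp
      have eq: "{y. tree_adj d h z y} = {butlast z}" using nbrs[OF z] lh by simp
      have F1: "F 1 = 1" "F 0 = 0" unfolding F_def f_poly_def by simp_all
      show ?thesis unfolding eq G_def using lh lz F1 by simp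
    qed
  next
    show "G (length []) = 0" by (simp add: G_def)
  next
    fix z assume "z \<in> tree_verts d h"
    show "0 \<le> G (length z) \<and> G (length z) \<le> F h"
      unfolding G_def F_def using f_mono[OF d0, of "h - length z" h] f_nonneg[OF d0, of "h - length z"]
      by simp
  next
    show "x \<in> tree_verts d h" by fact
  qed
  then show ?thesis using assms(5) by (simp add: G_def F_def)
qed

end
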